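(* Let $\mathbf P=(P,\leq,{}',0,1)$ be a bounded poset with a unary operation $'$ and let $(P,\sqcup,{}',0,1)$ be an algebra assigned to $\mathbf P$. Then $\mathbf P$ is a generalized orthomodular poset if and only if the following hold: (i) for all $x,y,z\in P$: if $(x\sqcup z)\sqcup(((x'\sqcap w)\sqcap((x\sqcup y)\sqcap w))\sqcup z)=z$ for all $w\in P$, then $(x\sqcup y)\sqcup z=z$; (ii) $(x\sqcap y)\sqcup x=x$ for all $x,y\in P$; (iii) $(x\sqcup y)\sqcup(x'\sqcup y)=1$ for all $x,y\in P$; (iv) $x''=x$ for all $x\in P$.
   Context: For a poset and $A\subseteq P$: $L(A)$ is the set of lower bounds of $A$, $U(A)$ the set of upper bounds; $L(a,b)=L(\{a,b\})$, $U(a,B)=U(\{a\}\cup B)$, etc. An orthoposet is a bounded poset $(P,\leq,{}',0,1)$ with a unary operation $'$ that is an antitone involution ($x''=x$; $x\leq y\Rightarrow y'\leq x'$) and a complementation ($L(x,x')=\{0\}$, $U(x,x')=\{1\}$). A generalized orthomodular poset is an orthoposet such that for all $x,y$, $x\leq y$ implies $U(y)=U(x,L(x',y))$. An algebra assigned to a bounded poset with unary operation $\mathbf P=(P,\leq,{}',0,1)$ is an algebra $(P,\sqcup,{}',0,1)$ of type $(2,1,0,0)$ (same $'$, $0$, $1$) such that for all $x,y\in P$: $x\sqcup y=y$ whenever $x\leq y$, and $x\sqcup y=y\sqcup x\in U(x,y)$. We write $x\sqcap y:=(x'\sqcup y')'$. *)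

theory Defs
  imports Main
begin

definition lbs :: "('a \<Rightarrow> 'a \<Rightarrow> bool) \<Rightarrow> 'a set \<Rightarrow> 'a set" where
  "lbs le A = {x. \<forall>a\<in>A. le x a}"

definition ubs :: "('a \<Rightarrow> 'a \<Rightarrow> bool) \<Rightarrow> 'a set \<Rightarrow> 'a set" where
  "ubs le A = {x. \<forall>a\<in>A. le a x}"

definition bounded_poset :: "('a \<Rightarrow> 'a \<Rightarrow> bool) \<Rightarrow> 'a \<Rightarrow> 'a \<Rightarrow> bool" where
  "bounded_poset le zero one \<longleftrightarrow>
     (\<forall>x. le x x) \<and> (\<forall>x y. le x y \<and> le y x \<longrightarrow> x = y) \<and>
     (\<forall>x y z. le x y \<and> le y z \<longrightarrow> le x z) \<and>
     (\<forall>x. le zero x \<and> le x one)"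

definition orthoposet :: "('a \<Rightarrow> 'a \<Rightarrow> bool) \<Rightarrow> ('a \<Rightarrow> 'a) \<Rightarrow> 'a \<Rightarrow> 'a \<Rightarrow> bool" where
  "orthoposet le c zero one \<longleftrightarrow>
     bounded_poset le zero one \<and>
     (\<forall>x. c (c x) = x) \<and> (\<forall>x y. le x y \<longrightarrow> le (c y) (c x)) \<and>
     (\<forall>x. lbs le {x, c x} = {zero} \<and> ubs le {x, c x} = {one})"

definition gen_orthomodular_poset :: "('a \<Rightarrow> 'a \<Rightarrow> bool) \<Rightarrow> ('a \<Rightarrow> 'a) \<Rightarrow> 'a \<Rightarrow> 'a \<Rightarrow> bool" where
  "gen_orthomodular_poset le c zero one \<longleftrightarrow>
     orthoposet le c zero one \<and>
     (\<forall>x y. le x y \<longrightarrow> ubs le {y} = ubs le ({x} \<union> lbs le {c x, y}))"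

text \<open>An algebra (P, join, c, zero, one) assigned to the bounded poset with unary operation
  (P, le, c, zero, one); it shares c, zero, one.\<close>
definition assigned_algebra :: "('a \<Rightarrow> 'a \<Rightarrow> bool) \<Rightarrow> ('a \<Rightarrow> 'a \<Rightarrow> 'a) \<Rightarrow> bool" where
  "assigned_algebra le join \<longleftrightarrow>
     (\<forall>x y. le x y \<longrightarrow> join x y = y) \<and>
     (\<forall>x y. join x y = join y x \<and> join x y \<in> ubs le {x, y})"

definition ameet :: "('a \<Rightarrow> 'a \<Rightarrow> 'a) \<Rightarrow> ('a \<Rightarrow> 'a) \<Rightarrow> 'a \<Rightarrow> 'a \<Rightarrow> 'a" where
  "ameet join c x y = c (join (c x) (c y))"

end

theory Submission
  imports Defs
begin

theorem theorem2:
  fixes le :: "'a \<Rightarrow> 'a \<Rightarrow> bool" and c :: "'a \<Rightarrow> 'a" and zero one :: 'a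
    and join :: "'a \<Rightarrow> 'a \<Rightarrow> 'a"
  assumes "bounded_poset le zero one"
    and "assigned_algebra le join"
  shows "gen_orthomodular_poset le c zero one \<longleftrightarrow>
    (\<forall>x y z. (\<forall>w. join (join x z)
                  (join (ameet join c (ameet join c (c x) w) (ameet join c (join x y) w)) z) = z)
              \<longrightarrow> join (join x y) z = z) \<and>
    (\<forall>x y. join (ameet join c x y) x = x) \<and>
    (\<forall>x y. join (join x y) (join (c x) y) = one) \<and>
    (\<forall>x. c (c x) = x)"
proof -
  have refl: "\<And>x. le x x" and antis: "\<And>x y. le x y \<Longrightarrow> le y x \<Longrightarrow> x = y"
    and trans: "\<And>x y z. le x y \<Longrightarrow> le y z \<Longrightarrow> le x z"
    and bot: "\<And>x. le zero x" and top: "\<And>x. le x one"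
    using assms(1) unfolding bounded_poset_def by blast+
  have jle: "\<And>x y. le x y \<Longrightarrow> join x y = y" and jc: "\<And>x y. join x y = join y x"
    and ub: "\<And>x y. le x (join x y) \<and> le y (join x y)"
    using assms(2) unfolding assigned_algebra_def ubs_def by auto
  have jeq: "\<And>x y. join x y = y \<longleftrightarrow> le x y"
    using jle ub by metis
  have jidem: "\<And>x. join x x = x" using jle refl by blast
  show ?thesis
  proof
    assume G: "gen_orthomodular_poset le c zero one"
    have inv: "\<And>x. c (c x) = x" and anti: "\<And>x y. le x y \<Longrightarrow> le (c y) (c x)"
      and compl: "\<And>x. lbs le {x, c x} = {zero} \<and> ubs le {x, c x} = {one}"
      and gom: "\<And>x y. le x y \<Longrightarrow> ubs le {y} = ubs le ({x} \<union> lbs le {c x, y})"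
      using G unfolding gen_orthomodular_poset_def orthoposet_def by blast+
    have mle: "\<And>a b. le b a \<Longrightarrow> ameet join c a b = b"
      unfolding ameet_def using anti jle inv by metis
    have i2: "\<And>x y. join (ameet join c x y) x = x"
    proof -
      fix x y
      have "le (c x) (join (c x) (c y))" using ub by blast
      hence "le (ameet join c x y) x" unfolding ameet_def using anti inv by metis
      thus "join (ameet join c x y) x = x" using jle by blast
    qed
    have i3: "\<And>x y. join (join x y) (join (c x) y) = one"
    proof -
      fix x y
      let ?u = "join (join x y) (join (c x) y)"
      have "le x ?u" using ub trans by metis
      moreover have "le (c x) ?u" using ub trans by metis
      ultimately have "?u \<in> ubs le {x, c x}" unfolding ubs_def by auto
      thus "?u = one" using compl by blast
    qed
    have i1: "\<And>x y z. (\<forall>w. join (join x z)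
                  (join (ameet join c (ameet join c (c x) w) (ameet join c (join x y) w)) z) = z)
              \<Longrightarrow> join (join x y) z = z"
    proof -
      fix x y z
      assume H: "\<forall>w. join (join x z)
                  (join (ameet join c (ameet join c (c x) w) (ameet join c (join x y) w)) z) = z"
      let ?t = "join x y"
      have xz: "le x z"
      proof -
        have "le (join x z) z" using H ub[of "join x z"] by metis
        thus ?thesis using ub trans by metis
      qed
      have "z \<in> ubs le ({x} \<union> lbs le {c x, ?t})"
      proof -
        have "\<And>v. v \<in> lbs le {c x, join x y} \<Longrightarrow> le v z"
        proof -
        fix v assume v: "v \<in> lbs le {c x, join x y}"
        hence v1: "le v (c x)" and v2: "le v ?t" unfolding lbs_def by auto
        have "ameet join c (c x) v = v" using mle v1 by blast
        moreover have "ameet join c ?t v = v" using mle v2 by blast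
        moreover have "ameet join c v v = v" using mle refl by blast
        ultimately have "join (join x z) (join v z) = z" using H[rule_format, of v] by simp
        hence "le (join v z) z" using ub[of "join x z" "join v z"] by simp
        moreover have "le v (join v z)" using ub by blast
        ultimately show "le v z" using trans by blast
      qed
      thus ?thesis using xz unfolding ubs_def by auto
      qed
      hence "z \<in> ubs le {?t}" using gom[of x ?t] ub[of x y] by simp
      hence "le ?t z" unfolding ubs_def by auto
      thus "join ?t z = z" using jle by blast
    qed
    show "(\<forall>x y z. (\<forall>w. join (join x z)
                  (join (ameet join c (ameet join c (c x) w) (ameet join c (join x y) w)) z) = z)
              \<longrightarrow> join (join x y) z = z) \<and>
    (\<forall>x y. join (ameet join c x y) x = x) \<and>
    (\<forall>x y. join (join x y) (join (c x) y) = one) \<and>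
    (\<forall>x. c (c x) = x)" using i1 i2 i3 inv by blast
  next
    assume R: "(\<forall>x y z. (\<forall>w. join (join x z)
                  (join (ameet join c (ameet join c (c x) w) (ameet join c (join x y) w)) z) = z)
              \<longrightarrow> join (join x y) z = z) \<and>
    (\<forall>x y. join (ameet join c x y) x = x) \<and>
    (\<forall>x y. join (join x y) (join (c x) y) = one) \<and>
    (\<forall>x. c (c x) = x)"
    have i1: "\<And>x y z. (\<forall>w. join (join x z)
                  (join (ameet join c (ameet join c (c x) w) (ameet join c (join x y) w)) z) = z)
              \<Longrightarrow> join (join x y) z = z"
      and i2: "\<And>x y. join (ameet join c x y) x = x"
      and i3: "\<And>x y. join (join x y) (join (c x) y) = one"
      and inv: "\<And>x. c (c x) = x" using R by blast+
    have m1: "\<And>x y. le (ameet join c x y) x" using i2 jeq by blast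
    have mc: "\<And>x y. ameet join c x y = ameet join c y x" unfolding ameet_def using jc by metis
    have m2: "\<And>x y. le (ameet join c x y) y" using m1 mc by metis
    have anti: "\<And>x y. le x y \<Longrightarrow> le (c y) (c x)"
    proof -
      fix x y assume "le x y"
      hence "ameet join c (c x) (c y) = c y" unfolding ameet_def using inv jle by metis
      thus "le (c y) (c x)" using m1 by metis
    qed
    have U: "\<And>x. ubs le {x, c x} = {one}"
    proof -
      fix x
      have "\<And>u. u \<in> ubs le {x, c x} \<Longrightarrow> u = one"
      proof -
        fix u assume "u \<in> ubs le {x, c x}"
        hence "le x u" "le (c x) u" unfolding ubs_def by auto
        thus "u = one" using i3[of x u] jle jidem by metis
      qed
      moreover have "one \<in> ubs le {x, c x}" unfolding ubs_def using top by auto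
      ultimately show "ubs le {x, c x} = {one}" by blast
    qed
    have c1: "c one = zero"
    proof -
      have "le (c one) (c (c zero))" using anti top by blast
      thus ?thesis using inv antis bot by metis
    qed
    have L: "\<And>x. lbs le {x, c x} = {zero}"
    proof -
      fix x
      have "\<And>v. v \<in> lbs le {x, c x} \<Longrightarrow> v = zero"
      proof -
        fix v assume "v \<in> lbs le {x, c x}"
        hence "le v x" "le v (c x)" unfolding lbs_def by auto
        hence "le (c x) (c v)" "le (c (c x)) (c v)" using anti by blast+
        hence "c v \<in> ubs le {x, c x}" unfolding ubs_def using inv by auto
        hence "c v = one" using U by blast
        thus "v = zero" using c1 inv by metis
      qed
      moreover have "zero \<in> lbs le {x, c x}" unfolding lbs_def using bot by auto
      ultimately show "lbs le {x, c x} = {zero}" by blast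
    qed
    have gom: "\<And>x y. le x y \<Longrightarrow> ubs le {y} = ubs le ({x} \<union> lbs le {c x, y})"
    proof -
      fix x y assume xy: "le x y"
      have "\<And>z. z \<in> ubs le ({x} \<union> lbs le {c x, y}) \<Longrightarrow> le y z"
      proof -
        fix z assume "z \<in> ubs le ({x} \<union> lbs le {c x, y})"
        hence xz: "le x z" and lz: "\<And>v. le v (c x) \<Longrightarrow> le v y \<Longrightarrow> le v z"
          unfolding ubs_def lbs_def by auto
        have "\<forall>w. join (join x z)
                  (join (ameet join c (ameet join c (c x) w) (ameet join c (join x y) w)) z) = z"
        proof
          fix w
          let ?s = "ameet join c (ameet join c (c x) w) (ameet join c (join x y) w)"
          have jxy: "join x y = y" using jle xy by blast
          have "le ?s (c x)" using trans[OF m1 m1] .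
          moreover have "le ?s y" using trans[OF m2 m1] jxy by simp
          ultimately have "le ?s z" using lz by blast
          thus "join (join x z) (join ?s z) = z" by (simp add: jle xz jidem)
        qed
        hence "join (join x y) z = z" using i1 by blast
        thus "le y z" using jle xy jeq by metis
      qed
      moreover have "\<And>z. le y z \<Longrightarrow> z \<in> ubs le ({x} \<union> lbs le {c x, y})"
      proof -
        fix z assume yz: "le y z"
        have "le x z" using trans[OF xy yz] .
        moreover have "\<And>v. v \<in> lbs le {c x, y} \<Longrightarrow> le v z"
        proof -
          fix v assume "v \<in> lbs le {c x, y}"
          hence "le v y" unfolding lbs_def by simp
          thus "le v z" using trans yz by blast
        qed
        ultimately show "z \<in> ubs le ({x} \<union> lbs le {c x, y})" unfolding ubs_def by blast
      qed
      ultimately show "ubs le {y} = ubs le ({x} \<union> lbs le {c x, y})"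
      proof (intro set_eqI iffI)
        fix z assume "z \<in> ubs le {y}"
        hence "le y z" unfolding ubs_def by simp
        thus "z \<in> ubs le ({x} \<union> lbs le {c x, y})" by fact
      next
        fix z assume "z \<in> ubs le ({x} \<union> lbs le {c x, y})"
        hence "le y z" by fact
        thus "z \<in> ubs le {y}" unfolding ubs_def by simp
      qed
    qed
    have "orthoposet le c zero one"
      unfolding orthoposet_def using assms(1) by (simp add: inv anti L U)
    thus "gen_orthomodular_poset le c zero one"
      unfolding gen_orthomodular_poset_def using gom by blast
  qed
qed

end
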